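(* Let $N\ge2$. Let $\mathbf s=[s_1,\dots,s_{2^N}]^{\mathrm T}$ be given in TT format: $s_{(k_1,\dots,k_N)}=\sum_{r_1=1}^{R_1}\cdots\sum_{r_{N-1}=1}^{R_{N-1}}s^{(1)}_{1,k_1,r_1}s^{(2)}_{r_1,k_2,r_2}\cdots s^{(N)}_{r_{N-1},k_N,1}$ for $k_m\in\{1,2\}$, with $R_0=R_N=1$. Let $\mathbf H\in\mathbb R^{2^N\times2^N}$ be the upper anti-triangular Hankel matrix with entries $\mathbf H_{ij}=s_{2^N+1-i-j}$ if $i+j\le 2^N$ and $\mathbf H_{ij}=0$ otherwise (so its first row is $(s_{2^N-1},\dots,s_1,0)$). Let $$\mathbf P=\begin{bmatrix}0&1\\1&0\end{bmatrix},\quad\mathbf Q=\begin{bmatrix}1&0\\0&0\end{bmatrix},\quad\mathbf R=\begin{bmatrix}0&0\\0&1\end{bmatrix},$$ and define the block matrices $$\widetilde{\mathbf M}^{(N)}_1=\begin{bmatrix}\mathbf P&\mathbf Q\end{bmatrix},\ \widetilde{\mathbf M}^{(n)}_1=\begin{bmatrix}\mathbf P&\mathbf Q\\\mathbf 0&\mathbf R\end{bmatrix}\ (2\le n\le N-1),\ \widetilde{\mathbf M}^{(1)}_1=\begin{bmatrix}\mathbf Q\\\mathbf R\end{bmatrix},$$ $$\widetilde{\mathbf M}^{(N)}_2=\begin{bmatrix}\mathbf Q&\mathbf 0\end{bmatrix},\ \widetilde{\mathbf M}^{(n)}_2=\begin{bmatrix}\mathbf Q&\mathbf 0\\\mathbf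 R&\mathbf P\end{bmatrix}\ (2\le n\le N-1),\ \widetilde{\mathbf M}^{(1)}_2=\begin{bmatrix}\mathbf 0\\\mathbf P\end{bmatrix}.$$ Denote by $\mathbf M^{(n)}_{q_n,k,q_{n-1}}\in\mathbb R^{2\times2}$ the $(q_n,q_{n-1})$-th $2\times2$ block of $\widetilde{\mathbf M}^{(n)}_k$ (so $q_N=1$, $q_0=1$, and $q_n\in\{1,2\}$ for $1\le n\le N-1$). For $t_n=(r_n,q_n)$ define $$\mathbf H^{(n)}_{t_n,t_{n-1}}=\mathbf H^{(n)}_{(r_n,q_n),(r_{n-1},q_{n-1})}=\sum_{k=1}^{2}s^{(n)}_{r_{n-1},k,r_n}\mathbf M^{(n)}_{q_n,k,q_{n-1}}\in\mathbb R^{2\times2},$$ with $t_N=t_0=1$ meaning $(r,q)=(1,1)$. Then $$\mathbf H=\sum_{t_1}\cdots\sum_{t_{N-1}}\mathbf H^{(N)}_{1,t_{N-1}}\otimes\mathbf H^{(N-1)}_{t_{N-1},t_{N-2}}\otimes\cdots\otimes\mathbf H^{(1)}_{t_1,1},$$ where each $t_n$ ranges over the $2R_n$ pairs $(r_n,q_n)\in\{1,\dots,R_n\}\times\{1,2\}$.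
   Context: Multi-index convention: $(k_1,\dots,k_N)=k_1+2(k_2-1)+\cdots+2^{N-1}(k_N-1)$ for $k_m\in\{1,2\}$. $\otimes$ denotes the Kronecker product; in a Kronecker product $\mathbf X\otimes\mathbf Y$ the index of $\mathbf Y$ varies fastest. *)

theory Defs
  imports Complex_Main
begin

text \<open>Matrices are functions nat => nat => real with 0-based entry
indices; their dimensions are tracked separately. Everything else (TT cores,
ranks, multi-indices k_m, vector index of s, r_n, q_n) is 1-based as in the paper.
TT cores: s n r k r' is the entry s^{(n)}_{r,k,r'} (r in 1..R(n-1), k in 1..2,
r' in 1..R n).\<close>

type_synonym rmat = "nat \<Rightarrow> nat \<Rightarrow> real"

definition tt_ranks :: "nat \<Rightarrow> (nat \<Rightarrow> nat) \<Rightarrow> (nat \<Rightarrow> nat) set" where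
  "tt_ranks N R = {r. r 0 = 1 \<and> r N = 1 \<and> (\<forall>n. 0 < n \<and> n < N \<longrightarrow> r n \<in> {1..R n})
                      \<and> (\<forall>n>N. r n = 1)}"

definition tt_entry :: "nat \<Rightarrow> (nat \<Rightarrow> nat) \<Rightarrow> (nat \<Rightarrow> nat \<Rightarrow> nat \<Rightarrow> nat \<Rightarrow> real)
                         \<Rightarrow> (nat \<Rightarrow> nat) \<Rightarrow> real" where
  "tt_entry N R s k = (\<Sum>r\<in>tt_ranks N R. \<Prod>n\<in>{1..N}. s n (r (n - 1)) (k n) (r n))"

definition multi_idx :: "nat \<Rightarrow> nat \<Rightarrow> nat" where
  "multi_idx i m = ((i - 1) div 2 ^ (m - 1)) mod 2 + 1"

definition svec :: "nat \<Rightarrow> (nat \<Rightarrow> nat) \<Rightarrow> (nat \<Rightarrow> nat \<Rightarrow> nat \<Rightarrow> nat \<Rightarrow> real) \<Rightarrow> nat \<Rightarrow> real" where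
  "svec N R s i = tt_entry N R s (multi_idx i)"

text \<open>Upper anti-triangular Hankel matrix (2^N x 2^N): with 1-based i', j',
H_{i'j'} = s_{2^N+1-i'-j'} if i'+j' <= 2^N, else 0. Here 0-based i = i'-1, j = j'-1.\<close>
definition hankel :: "nat \<Rightarrow> (nat \<Rightarrow> nat) \<Rightarrow> (nat \<Rightarrow> nat \<Rightarrow> nat \<Rightarrow> nat \<Rightarrow> real) \<Rightarrow> rmat" where
  "hankel N R s = (\<lambda>i j. if (i + 1) + (j + 1) \<le> 2 ^ N
                         then svec N R s (2 ^ N + 1 - (i + 1) - (j + 1)) else 0)"

definition Pm :: rmat where
  "Pm = (\<lambda>i j. if (i = 0 \<and> j = 1) \<or> (i = 1 \<and> j = 0) then 1 else 0)"
definition Qm :: rmat where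
  "Qm = (\<lambda>i j. if i = 0 \<and> j = 0 then 1 else 0)"
definition Rm :: rmat where
  "Rm = (\<lambda>i j. if i = 1 \<and> j = 1 then 1 else 0)"
definition Zm :: rmat where
  "Zm = (\<lambda>i j. 0)"

text \<open>Mblk N n q k q' = M^{(n)}_{q,k,q'}: the (q,q')-th 2x2 block of the block matrix
tilde M^{(n)}_k (1-based block indices), as specified in the paper.\<close>
definition Mblk :: "nat \<Rightarrow> nat \<Rightarrow> nat \<Rightarrow> nat \<Rightarrow> nat \<Rightarrow> rmat" where
  "Mblk N n q k q' =
     (if n = N then
        (if q = 1 \<and> k = 1 \<and> q' = 1 then Pm
         else if q = 1 \<and> k = 1 \<and> q' = 2 then Qm
         else if q = 1 \<and> k = 2 \<and> q' = 1 then Qm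
         else Zm)
      else if n = 1 then
        (if q = 1 \<and> k = 1 \<and> q' = 1 then Qm
         else if q = 2 \<and> k = 1 \<and> q' = 1 then Rm
         else if q = 2 \<and> k = 2 \<and> q' = 1 then Pm
         else Zm)
      else
        (if k = 1 then
           (if q = 1 \<and> q' = 1 then Pm
            else if q = 1 \<and> q' = 2 then Qm
            else if q = 2 \<and> q' = 2 then Rm
            else Zm)
         else if k = 2 then
           (if q = 1 \<and> q' = 1 then Qm
            else if q = 2 \<and> q' = 1 then Rm
            else if q = 2 \<and> q' = 2 then Pm
            else Zm)
         else Zm))"

definition Hcore :: "nat \<Rightarrow> (nat \<Rightarrow> nat \<Rightarrow> nat \<Rightarrow> nat \<Rightarrow> real) \<Rightarrow> nat
                      \<Rightarrow> nat \<times> nat \<Rightarrow> nat \<times> nat \<Rightarrow> rmat" where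
  "Hcore N s n t t' = (\<lambda>a b. \<Sum>k\<in>{1,2}. s n (fst t') k (fst t) * Mblk N n (snd t) k (snd t') a b)"

text \<open>Kronecker product A (x) B where B has mB rows and nB columns
(index of B varies fastest).\<close>
definition kron :: "nat \<Rightarrow> nat \<Rightarrow> rmat \<Rightarrow> rmat \<Rightarrow> rmat" where
  "kron mB nB A B = (\<lambda>i j. A (i div mB) (j div nB) * B (i mod mB) (j mod nB))"

fun kron_list :: "rmat list \<Rightarrow> rmat" where
  "kron_list [] = (\<lambda>i j. if i = 0 \<and> j = 0 then 1 else 0)"
| "kron_list (A # As) = kron (2 ^ length As) (2 ^ length As) A (kron_list As)"

definition t_idx :: "nat \<Rightarrow> (nat \<Rightarrow> nat) \<Rightarrow> (nat \<Rightarrow> nat \<times> nat) set" where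
  "t_idx N R = {t. t 0 = (1, 1) \<and> t N = (1, 1)
                   \<and> (\<forall>n. 0 < n \<and> n < N \<longrightarrow> t n \<in> {1..R n} \<times> {1, 2})
                   \<and> (\<forall>n>N. t n = (1, 1))}"

end

theory Submission
  imports Defs "HOL-Library.FuncSet"
begin


definition dig :: "nat \<Rightarrow> nat \<Rightarrow> nat" where "dig x n = x div 2^(n-1) mod 2"
definition Dsum :: "(nat\<Rightarrow>nat) \<Rightarrow> nat \<Rightarrow> nat" where "Dsum d m = (\<Sum>n\<in>{1..m}. d n * 2^(n-1))"
definition Vv :: "nat \<Rightarrow> nat \<Rightarrow> (nat\<Rightarrow>nat) \<Rightarrow> nat \<Rightarrow> nat" where
  "Vv i j d m = i mod 2^m + j mod 2^m + Dsum d m + 2"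
definition ee :: "(nat \<Rightarrow> nat) \<Rightarrow> nat \<Rightarrow> nat" where "ee q m = (if m = 0 then 1 else q m - 1)"
definition Qset :: "nat \<Rightarrow> (nat \<Rightarrow> nat) set" where
  "Qset N = {q. q 0 = 1 \<and> q N = 1 \<and> (\<forall>n. 0<n \<and> n<N \<longrightarrow> q n \<in> {1,2}) \<and> (\<forall>n>N. q n = 1)}"
definition good :: "nat \<Rightarrow> nat \<Rightarrow> nat \<Rightarrow> (nat\<Rightarrow>nat) \<Rightarrow> (nat\<Rightarrow>nat) \<Rightarrow> bool" where
  "good N i j d q = (\<forall>n\<in>{1..N}. dig i n + dig j n + d n + ee q (n-1) = 1 + 2 * ee q n)"

lemma mod_Suc_pow: "(x::nat) mod 2^(Suc m) = x mod 2^m + dig x (Suc m) * 2^m"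
  using mod_mult2_eq[of x "2^m" 2] by (simp add: dig_def power_Suc2 mult.commute)

lemma Dsum_0[simp]: "Dsum d 0 = 0" by (simp add: Dsum_def)
lemma Dsum_Suc: "Dsum d (Suc m) = Dsum d m + d (Suc m) * 2^m"
  by (simp add: Dsum_def)

lemma Vv_0: "Vv i j d 0 = 2" by (simp add: Vv_def)
lemma Vv_Suc: "Vv i j d (Suc m) = Vv i j d m + (dig i (Suc m) + dig j (Suc m) + d (Suc m)) * 2^m"
  unfolding Vv_def mod_Suc_pow Dsum_Suc by (simp add: algebra_simps)

lemma step_iff:
  assumes "V' = V + u * 2^m" "V = 2^m * (1 + x)"
  shows "V' = 2^Suc m * (1 + (y::nat)) \<longleftrightarrow> u + x = 1 + 2 * y"
proof -
  have e1: "V' = 2^m * (1 + x + u)" using assms by (simp add: algebra_simps)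
  have e2: "(2::nat)^Suc m * (1 + y) = 2^m * (2 + 2*y)" by (simp add: algebra_simps)
  have e3: "(2::nat)^m * (1 + x + u) = 2^m * (2 + 2*y) \<longleftrightarrow> 1 + x + u = 2 + 2*y"
    by (subst mult_cancel_left) simp
  show ?thesis unfolding e1 e2 e3 by arith
qed

lemma Dsum_lt: "(\<forall>n\<in>{1..m}. d n < 2) \<Longrightarrow> Dsum d m < 2^m"
proof (induction m)
  case 0 then show ?case by simp
next
  case (Suc m)
  have d2: "d (Suc m) < 2" using Suc.prems by simp
  have "Dsum d m < 2^m" using Suc by auto
  moreover have "d (Suc m) * 2^m \<le> 1 * 2^m" using d2 by (intro mult_le_mono1) simp
  moreover have "(2::nat)^Suc m = 2^m + 2^m" by simp
  ultimately show ?case unfolding Dsum_Suc by linarith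
qed

lemma Dsum_split: "m \<le> M \<Longrightarrow> \<exists>X. Dsum d M = Dsum d m + 2^m * X"
proof (induction M)
  case 0 then show ?case by simp
next
  case (Suc M)
  show ?case
  proof (cases "m = Suc M")
    case True then show ?thesis by (rule_tac x=0 in exI) simp
  next
    case False
    with Suc obtain X where X: "Dsum d M = Dsum d m + 2^m * X" by auto
    have "(2::nat)^M = 2^m * 2^(M-m)" using False Suc.prems
      by (simp add: power_add[symmetric])
    then show ?thesis using X
      by (rule_tac x="X + d (Suc M) * 2^(M-m)" in exI) (simp add: Dsum_Suc algebra_simps)
  qed
qed

lemma good_V:
  assumes "good N i j d q" "m \<le> N"
  shows "Vv i j d m = 2^m * (1 + ee q m)"
  using assms(2)
proof (induction m)
  case 0 then show ?case by (simp add: Vv_0 ee_def)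
next
  case (Suc m)
  then have h: "Vv i j d m = 2^m * (1 + ee q m)" by simp
  have g: "dig i (Suc m) + dig j (Suc m) + d (Suc m) + ee q m = 1 + 2 * ee q (Suc m)"
    using assms(1) Suc.prems unfolding good_def by force
  show ?case using step_iff[OF Vv_Suc h] g by simp
qed

lemma Vv_N: "i < 2^N \<Longrightarrow> j < 2^N \<Longrightarrow> Vv i j d N = i + j + Dsum d N + 2"
  by (simp add: Vv_def)

lemma good_unique:
  assumes "q \<in> Qset N" "q' \<in> Qset N" "good N i j d q" "good N i j d q'"
  shows "q = q'"
proof
  fix n
  show "q n = q' n"
  proof (cases "0 < n \<and> n < N")
    case True
    have "2^n * (1 + ee q n) = 2^n * (1 + ee q' n)"
      using good_V[OF assms(3), of n] good_V[OF assms(4), of n] True by simp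
    then have "ee q n = ee q' n" by simp
    moreover have "q n \<in> {1,2}" "q' n \<in> {1,2}" using assms(1,2) True by (auto simp: Qset_def)
    ultimately show ?thesis using True by (auto simp: ee_def)
  next
    case False
    then have "n = 0 \<or> n = N \<or> n > N" by auto
    then show ?thesis using assms(1,2) by (auto simp: Qset_def)
  qed
qed

lemma good_cond:
  assumes "good N i j d q" "q \<in> Qset N" "0 < N" "i < 2^N" "j < 2^N"
  shows "i + j + Dsum d N + 2 = 2^N"
proof -
  have "ee q N = 0" using assms(2,3) by (simp add: ee_def Qset_def)
  then show ?thesis using good_V[OF assms(1), of N] Vv_N[OF assms(4,5)] by simp
qed

lemma good_exists:
  assumes "0 < N" "i < 2^N" "j < 2^N" "\<forall>n\<in>{1..N}. d n < 2" "i + j + Dsum d N + 2 = 2^N"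
  shows "\<exists>q\<in>Qset N. good N i j d q"
proof -
  define q where "q = (\<lambda>n. if 0 < n \<and> n < N then Vv i j d n div 2^n else 1)"
  have A: "2^m dvd Vv i j d m \<and> 1 \<le> Vv i j d m div 2^m \<and> Vv i j d m div 2^m \<le> 2" if m: "m \<le> N" for m
  proof -
    obtain X where X: "Dsum d N = Dsum d m + 2^m * X" using Dsum_split[OF m] by blast
    have "i = i mod 2^m + 2^m * (i div 2^m)" "j = j mod 2^m + 2^m * (j div 2^m)" by simp_all
    then have "(2::nat)^N = Vv i j d m + 2^m * (i div 2^m + j div 2^m + X)"
      using assms(5) X unfolding Vv_def by (simp add: algebra_simps)
    moreover have "(2::nat)^m dvd 2^N" using m by (simp add: le_imp_power_dvd)
    ultimately have dv: "2^m dvd Vv i j d m"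
      by (metis dvd_add_left_iff dvd_triv_left)
    have "Vv i j d m > 0" by (simp add: Vv_def)
    then have "2^m \<le> Vv i j d m" using dv by (simp add: dvd_imp_le)
    then have g1: "1 \<le> Vv i j d m div 2^m" by (simp add: div_greater_zero_iff Suc_le_eq)
    have "i mod 2^m < 2^m" "j mod 2^m < 2^m" by simp_all
    moreover have "Dsum d m < 2^m" using Dsum_lt[of m d] assms(4) m by auto
    ultimately have "Vv i j d m < 2^m * 3" unfolding Vv_def by linarith
    then have "Vv i j d m div 2^m < 3" by (simp add: less_mult_imp_div_less)
    then show ?thesis using dv g1 by simp
  qed
  have B: "Vv i j d m = 2^m * (1 + ee q m)" if m: "m \<le> N" for m
  proof -
    consider "m = 0" | "m = N" | "0 < m \<and> m < N" using m by linarith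
    then show ?thesis
    proof cases
      case 1 then show ?thesis by (simp add: Vv_0 ee_def)
    next
      case 2 then show ?thesis using assms(1) Vv_N[OF assms(2,3)] assms(5) by (simp add: ee_def q_def)
    next
      case 3
      then have "1 + ee q m = Vv i j d m div 2^m" using A[OF m] by (simp add: ee_def q_def)
      then show ?thesis using A[OF m] by simp
    qed
  qed
  have "good N i j d q"
    unfolding good_def
  proof
    fix n assume n: "n \<in> {1..N}"
    then obtain p where p: "n = Suc p" by (cases n) auto
    have h1: "Vv i j d (Suc p) = 2^Suc p * (1 + ee q (Suc p))" using n p by (intro B) simp
    have Bp: "Vv i j d p = 2^p * (1 + ee q p)" using n p by (intro B) simp
    from step_iff[OF Vv_Suc Bp, of "ee q (Suc p)"] h1
    have "dig i (Suc p) + dig j (Suc p) + d (Suc p) + ee q p = 1 + 2 * ee q (Suc p)" by blast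
    then show "dig i n + dig j n + d n + ee q (n - 1) = 1 + 2 * ee q n"
      using p by simp
  qed
  moreover have "q \<in> Qset N"
  proof -
    have "q n \<in> {1,2}" if "0 < n" "n < N" for n
      using A[of n] that by (auto simp: q_def)
    then show ?thesis by (auto simp: Qset_def q_def)
  qed
  ultimately show ?thesis by blast
qed

lemma finite_Qset: "finite (Qset N)"
proof -
  have "Qset N \<subseteq> {f. \<forall>x. (x \<in> {1..<N} \<longrightarrow> f x \<in> {1,2}) \<and> (x \<notin> {1..<N} \<longrightarrow> f x = 1)}"
  proof
    fix f assume f: "f \<in> Qset N"
    show "f \<in> {f. \<forall>x. (x \<in> {1..<N} \<longrightarrow> f x \<in> {1,2}) \<and> (x \<notin> {1..<N} \<longrightarrow> f x = 1)}"
    proof (intro CollectI allI conjI impI)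
      fix x assume "x \<in> {1..<N}" then show "f x \<in> {1,2}" using f by (simp add: Qset_def)
    next
      fix x assume "x \<notin> {1..<N}"
      then have "x = 0 \<or> x = N \<or> x > N" by auto
      then show "f x = 1" using f by (auto simp: Qset_def)
    qed
  qed
  then show ?thesis using finite_set_of_finite_funs[of "{1..<N}" "{1,2::nat}" 1] finite_subset by blast
qed

lemma key_sum:
  assumes "0 < N" "i < 2^N" "j < 2^N" "\<forall>n\<in>{1..N}. d n < 2"
  shows "(\<Sum>q\<in>Qset N. if good N i j d q then 1 else 0 :: real) =
         (if i + j + Dsum d N + 2 = 2^N then 1 else 0)"
proof (cases "i + j + Dsum d N + 2 = 2^N")
  case True
  then obtain q0 where q0: "q0 \<in> Qset N" "good N i j d q0" using good_exists assms by blast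
  have "(\<Sum>q\<in>Qset N. if good N i j d q then 1 else 0 :: real) = (\<Sum>q\<in>Qset N. if q = q0 then 1 else 0)"
  proof (rule sum.cong)
    fix q assume "q \<in> Qset N"
    then have "good N i j d q \<longleftrightarrow> q = q0" using q0 good_unique by blast
    then show "(if good N i j d q then 1 else 0 :: real) = (if q = q0 then 1 else 0)" by simp
  qed simp
  also have "\<dots> = 1" using q0 finite_Qset by simp
  finally show ?thesis using True by simp
next
  case False
  have "(\<Sum>q\<in>Qset N. if good N i j d q then 1 else 0 :: real) = 0"
  proof (rule sum.neutral, rule ballI)
    fix q assume "q \<in> Qset N"
    then have "\<not> good N i j d q" using good_cond assms False by blast
    then show "(if good N i j d q then 1 else 0 :: real) = 0" by simp
  qed
  then show ?thesis using False by simp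
qed



lemma dig_lt: "dig x n < 2" by (simp add: dig_def)

lemma dig_mod: "0 < n \<Longrightarrow> n \<le> L \<Longrightarrow> dig (x mod 2^L) n = dig x n"
proof -
  assume n: "0 < n" "n \<le> L"
  have "x mod 2^L div 2^(n-1) mod 2 = x div 2^(n-1) mod 2"
  proof -
    have "(2::nat)^L = 2^(n-1) * 2 * 2^(L-n)" using n by (simp add: power_add[symmetric] power_Suc2[symmetric])
    then have "x mod 2^L = x mod (2^(n-1) * (2 * 2^(L-n)))" by (simp add: mult.assoc)
    also have "\<dots> = 2^(n-1) * (x div 2^(n-1) mod (2 * 2^(L-n))) + x mod 2^(n-1)"
      by (rule mod_mult2_eq)
    finally have "x mod 2^L div 2^(n-1) = x div 2^(n-1) mod (2 * 2^(L-n))" by simp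
    then show ?thesis by (simp add: mod_mult2_eq mod_mod_cancel)
  qed
  then show ?thesis by (simp add: dig_def)
qed

lemma kron_list_map:
  "i < 2^L \<Longrightarrow> j < 2^L \<Longrightarrow>
   kron_list (map f (rev [1..<L+1])) i j = (\<Prod>n\<in>{1..L}. f n (dig i n) (dig j n))"
proof (induction L arbitrary: i j)
  case 0 then show ?case by simp
next
  case (Suc L)
  have r: "rev [1..<Suc L + 1] = Suc L # rev [1..<L+1]" by simp
  have IH: "kron_list (map f (rev [1..<L+1])) (i mod 2^L) (j mod 2^L) =
            (\<Prod>n\<in>{1..L}. f n (dig i n) (dig j n))"
  proof -
    have "(\<Prod>n\<in>{1..L}. f n (dig (i mod 2^L) n) (dig (j mod 2^L) n)) = (\<Prod>n\<in>{1..L}. f n (dig i n) (dig j n))"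
      by (rule prod.cong) (simp_all add: dig_mod)
    then show ?thesis using Suc.IH[of "i mod 2^L" "j mod 2^L"] by simp
  qed
  have di: "i div 2^L = dig i (Suc L)" "j div 2^L = dig j (Suc L)"
    using Suc.prems by (simp_all add: dig_def less_mult_imp_div_less mult.commute)
  have "kron_list (map f (rev [1..<Suc L + 1])) i j =
        f (Suc L) (i div 2^L) (j div 2^L) * kron_list (map f (rev [1..<L+1])) (i mod 2^L) (j mod 2^L)"
  proof -
    have len: "length (map f (rev [1..<L+1])) = L" by simp
    show ?thesis unfolding r list.map(2) kron_list.simps(2) len kron_def by (rule refl)
  qed
  also have "\<dots> = (\<Prod>n\<in>{1..Suc L}. f n (dig i n) (dig j n))"
    unfolding IH di by (simp add: mult.commute)
  finally show ?case .
qed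

lemma prod_ind: "finite A \<Longrightarrow> (\<Prod>x\<in>A. if P x then 1 else 0 :: real) = (if \<forall>x\<in>A. P x then 1 else 0)"
  by (induction A rule: finite_induct) auto

lemma Dsum_dig: "Dsum (dig c) m = c mod 2^m"
proof (induction m)
  case (Suc m) then show ?case unfolding Dsum_Suc mod_Suc_pow by simp
qed simp

lemma dig_mod_div: "dig x (Suc p) = x mod 2^(Suc p) div 2^p"
  unfolding mod_Suc_pow by (simp add: dig_def)

lemma dig_Dsum:
  assumes "\<forall>n\<in>{1..M}. d n < 2" "n \<in> {1..M}"
  shows "dig (Dsum d M) n = d n"
proof -
  obtain p where p: "n = Suc p" using assms(2) by (cases n) auto
  obtain X where X: "Dsum d M = Dsum d n + 2^n * X" using Dsum_split[of n M d] assms(2) by auto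
  have lt: "Dsum d n < 2^n" using Dsum_lt[of n d] assms by auto
  have "Dsum d M mod 2^n = Dsum d n" unfolding X using lt by simp
  moreover have lp: "Dsum d p < 2^p" using Dsum_lt[of p d] assms p by auto
  ultimately show ?thesis unfolding dig_mod_div p using lp by (simp add: Dsum_Suc)
qed



lemma Mblk_arith:
  assumes "2 \<le> N" "1 \<le> n" "n \<le> N" "a < 2" "b < 2" "k \<in> {1,2}" "q \<in> {1,2}" "q' \<in> {1,2}"
    "n = 1 \<longrightarrow> q' = 1" "n = N \<longrightarrow> q = 1"
  shows "Mblk N n q k q' a b =
     (if a + b + (k - 1) + (if n = 1 then 1 else q' - 1) = 1 + 2 * (q - 1) then 1 else 0)"
proof -
  have a: "a = 0 \<or> a = 1" and b: "b = 0 \<or> b = 1" using assms by auto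
  show ?thesis
    using assms a b
    by (auto simp: Mblk_def Pm_def Qm_def Rm_def Zm_def)
qed

lemma Qset_range: "q \<in> Qset N \<Longrightarrow> m \<le> N \<Longrightarrow> q m \<in> {1,2}"
proof -
  assume q: "q \<in> Qset N" and m: "m \<le> N"
  consider "m = 0" | "m = N" | "0 < m \<and> m < N" using m by linarith
  then show ?thesis using q by cases (auto simp: Qset_def)
qed

lemma prod_Mblk:
  assumes N: "2 \<le> N" and q: "q \<in> Qset N" and kk: "kk \<in> PiE {1..N} (\<lambda>_. {1,2::nat})"
  shows "(\<Prod>n\<in>{1..N}. Mblk N n (q n) (kk n) (q (n-1)) (dig i n) (dig j n)) =
         (if good N i j (\<lambda>n. kk n - 1) q then 1 else 0)"
proof -
  have "(\<Prod>n\<in>{1..N}. Mblk N n (q n) (kk n) (q (n-1)) (dig i n) (dig j n)) =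
        (\<Prod>n\<in>{1..N}. if dig i n + dig j n + (kk n - 1) + ee q (n-1) = 1 + 2 * ee q n then 1 else 0)"
  proof (rule prod.cong)
    fix n assume n: "n \<in> {1..N}"
    have qn: "q n \<in> {1,2}" "q (n-1) \<in> {1,2}" "n = 1 \<longrightarrow> q (n-1) = 1" "n = N \<longrightarrow> q n = 1"
      using Qset_range[OF q, of n] Qset_range[OF q, of "n-1"] q n by (auto simp: Qset_def)
    have e: "(if n = 1 then 1 else q (n-1) - 1) = ee q (n-1)" "q n - 1 = ee q n"
      using n by (auto simp: ee_def)
    show "Mblk N n (q n) (kk n) (q (n-1)) (dig i n) (dig j n) =
          (if dig i n + dig j n + (kk n - 1) + ee q (n-1) = 1 + 2 * ee q n then 1 else 0)"
      using Mblk_arith[OF N _ _ dig_lt dig_lt _ qn] n kk e by (auto simp: PiE_iff)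
  qed simp
  also have "\<dots> = (if good N i j (\<lambda>n. kk n - 1) q then 1 else 0)"
    by (simp add: prod_ind good_def)
  finally show ?thesis .
qed

lemma t_idx_reindex:
  "(\<Sum>t\<in>t_idx N R. F t) = (\<Sum>r\<in>tt_ranks N R. \<Sum>q\<in>Qset N. F (\<lambda>n. (r n, q n)))"
proof -
  let ?g = "\<lambda>(r,q) n. (r n :: nat, q n :: nat)"
  have img: "t_idx N R = ?g ` (tt_ranks N R \<times> Qset N)"
  proof
    show "t_idx N R \<subseteq> ?g ` (tt_ranks N R \<times> Qset N)"
    proof
      fix t assume t: "t \<in> t_idx N R"
      have "(fst \<circ> t, snd \<circ> t) \<in> tt_ranks N R \<times> Qset N"
        using t by (auto simp: t_idx_def tt_ranks_def Qset_def mem_Times_iff)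
      moreover have "t = ?g (fst \<circ> t, snd \<circ> t)" by (simp add: fun_eq_iff)
      ultimately show "t \<in> ?g ` (tt_ranks N R \<times> Qset N)" by blast
    qed
  next
    show "?g ` (tt_ranks N R \<times> Qset N) \<subseteq> t_idx N R"
      by (auto simp: t_idx_def tt_ranks_def Qset_def)
  qed
  have inj: "inj_on ?g (tt_ranks N R \<times> Qset N)"
    by (auto simp: inj_on_def fun_eq_iff)
  have "(\<Sum>t\<in>t_idx N R. F t) = (\<Sum>x\<in>tt_ranks N R \<times> Qset N. F (?g x))"
    unfolding img by (rule sum.reindex[OF inj, unfolded comp_def])
  also have "\<dots> = (\<Sum>r\<in>tt_ranks N R. \<Sum>q\<in>Qset N. F (\<lambda>n. (r n, q n)))"
    by (simp add: sum.cartesian_product split_def)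
  finally show ?thesis .
qed



theorem mainTheorem6:
  fixes N :: nat and R :: "nat \<Rightarrow> nat"
    and s :: "nat \<Rightarrow> nat \<Rightarrow> nat \<Rightarrow> nat \<Rightarrow> real"
  assumes "N \<ge> 2" and "R 0 = 1" and "R N = 1"
  shows "\<forall>i < 2 ^ N. \<forall>j < 2 ^ N.
           hankel N R s i j =
           (\<Sum>t\<in>t_idx N R.
              kron_list (map (\<lambda>n. Hcore N s n (t n) (t (n - 1))) (rev [1..<N+1])) i j)"
proof (intro allI impI)
  fix i j :: nat assume i: "i < 2^N" and j: "j < 2^N"
  have N0: "0 < N" using assms by simp
  define P where "P = ((i+1)+(j+1) \<le> (2::nat)^N)"
  define c where "c = (2::nat)^N - 2 - i - j"
  define k0 where "k0 = restrict (\<lambda>n. dig c n + 1) {1..N}"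
  define KK where "KK = PiE {1..N} (\<lambda>_. {1,2::nat})"
  define S where "S r kk = (\<Prod>n\<in>{1..N}. s n (r (n-1)) (kk n) (r n))" for r kk
  define Mq where "Mq q kk = (\<Prod>n\<in>{1..N}. Mblk N n (q n) (kk n) (q (n-1)) (dig i n) (dig j n))" for q kk
  have finKK: "finite KK" unfolding KK_def by (intro finite_PiE) auto
  have k0KK: "k0 \<in> KK" unfolding k0_def KK_def using dig_lt[of c]
    by (auto simp: PiE_iff less_2_cases_iff)
  have cond: "(i + j + Dsum (\<lambda>n. kk n - 1) N + 2 = 2^N) \<longleftrightarrow> P \<and> kk = k0" if kk: "kk \<in> KK" for kk
  proof -
    have d2: "\<forall>n\<in>{1..N}. kk n - 1 < 2" using kk by (auto simp: KK_def PiE_iff)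
    have "(i + j + Dsum (\<lambda>n. kk n - 1) N + 2 = 2^N) \<longleftrightarrow> P \<and> Dsum (\<lambda>n. kk n - 1) N = c"
      unfolding P_def c_def by auto
    also have "\<dots> \<longleftrightarrow> P \<and> kk = k0"
    proof (cases P)
      case True
      have cl: "c < 2^N" unfolding c_def by simp
      have "Dsum (\<lambda>n. kk n - 1) N = c \<longleftrightarrow> kk = k0"
      proof
        assume h: "Dsum (\<lambda>n. kk n - 1) N = c"
        show "kk = k0"
        proof (rule PiE_ext)
          show "kk \<in> PiE {1..N} (\<lambda>_. {1,2::nat})" using kk by (simp add: KK_def)
          show "k0 \<in> PiE {1..N} (\<lambda>_. {1,2::nat})" using k0KK by (simp add: KK_def)
          fix n assume n: "n \<in> {1..N}"
          have "dig c n = kk n - 1" using dig_Dsum[OF d2 n] h by simp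
          moreover have "kk n \<in> {1,2}" using kk n by (auto simp: KK_def PiE_iff)
          ultimately show "kk n = k0 n" using n by (auto simp: k0_def)
        qed
      next
        assume h: "kk = k0"
        have "Dsum (\<lambda>n. kk n - 1) N = Dsum (dig c) N"
          unfolding Dsum_def h by (rule sum.cong) (auto simp: k0_def)
        also have "\<dots> = c" using cl by (simp add: Dsum_dig)
        finally show "Dsum (\<lambda>n. kk n - 1) N = c" .
      qed
      then show ?thesis using True by simp
    qed simp
    finally show ?thesis .
  qed
  have Mq_sum: "(\<Sum>q\<in>Qset N. Mq q kk) = (if P \<and> kk = k0 then 1 else 0)" if kk: "kk \<in> KK" for kk
  proof -
    have d2: "\<forall>n\<in>{1..N}. kk n - 1 < 2" using kk by (auto simp: KK_def PiE_iff)
    have "(\<Sum>q\<in>Qset N. Mq q kk) = (\<Sum>q\<in>Qset N. if good N i j (\<lambda>n. kk n - 1) q then 1 else 0)"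
      unfolding Mq_def using prod_Mblk[OF assms(1) _ kk[unfolded KK_def]] by (intro sum.cong) auto
    also have "\<dots> = (if i + j + Dsum (\<lambda>n. kk n - 1) N + 2 = 2^N then 1 else 0)"
      by (rule key_sum[OF N0 i j d2])
    finally show ?thesis using cond[OF kk] by simp
  qed
  have RHS_t: "kron_list (map (\<lambda>n. Hcore N s n (t n) (t (n - 1))) (rev [1..<N+1])) i j =
               (\<Sum>kk\<in>KK. S (\<lambda>n. fst (t n)) kk * Mq (\<lambda>n. snd (t n)) kk)" for t
  proof -
    have "kron_list (map (\<lambda>n. Hcore N s n (t n) (t (n - 1))) (rev [1..<N+1])) i j =
          (\<Prod>n\<in>{1..N}. Hcore N s n (t n) (t (n - 1)) (dig i n) (dig j n))"
      by (rule kron_list_map[OF i j])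
    also have "\<dots> = (\<Prod>n\<in>{1..N}. \<Sum>k\<in>{1,2}. s n (fst (t (n-1))) k (fst (t n)) *
                        Mblk N n (snd (t n)) k (snd (t (n-1))) (dig i n) (dig j n))"
      by (simp add: Hcore_def)
    also have "\<dots> = (\<Sum>kk\<in>KK. \<Prod>n\<in>{1..N}. s n (fst (t (n-1))) (kk n) (fst (t n)) *
                        Mblk N n (snd (t n)) (kk n) (snd (t (n-1))) (dig i n) (dig j n))"
      unfolding KK_def by (rule prod_sum_PiE) auto
    also have "\<dots> = (\<Sum>kk\<in>KK. S (\<lambda>n. fst (t n)) kk * Mq (\<lambda>n. snd (t n)) kk)"
      unfolding S_def Mq_def by (simp add: prod.distrib)
    finally show ?thesis .
  qed
  have "(\<Sum>t\<in>t_idx N R. kron_list (map (\<lambda>n. Hcore N s n (t n) (t (n - 1))) (rev [1..<N+1])) i j)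
        = (\<Sum>r\<in>tt_ranks N R. \<Sum>q\<in>Qset N. \<Sum>kk\<in>KK. S r kk * Mq q kk)"
    unfolding RHS_t t_idx_reindex by simp
  also have "\<dots> = (\<Sum>r\<in>tt_ranks N R. \<Sum>kk\<in>KK. S r kk * (\<Sum>q\<in>Qset N. Mq q kk))"
    by (simp add: sum.swap[of _ "Qset N"] sum_distrib_left)
  also have "\<dots> = (\<Sum>r\<in>tt_ranks N R. \<Sum>kk\<in>KK. S r kk * (if P \<and> kk = k0 then 1 else 0))"
    by (intro sum.cong refl) (simp add: Mq_sum)
  also have "\<dots> = (\<Sum>r\<in>tt_ranks N R. if P then S r k0 else 0)"
  proof (rule sum.cong[OF refl])
    fix r
    have "(\<Sum>kk\<in>KK. S r kk * (if P \<and> kk = k0 then 1 else 0)) = (\<Sum>kk\<in>KK. if kk = k0 then (if P then S r kk else 0) else 0)"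
      by (intro sum.cong refl) auto
    also have "\<dots> = (if P then S r k0 else 0)" using finKK k0KK by simp
    finally show "(\<Sum>kk\<in>KK. S r kk * (if P \<and> kk = k0 then 1 else 0)) = (if P then S r k0 else 0)" .
  qed
  also have "\<dots> = hankel N R s i j"
  proof (cases P)
    case True
    have mi: "multi_idx (2 ^ N + 1 - (i + 1) - (j + 1)) n = k0 n" if "n \<in> {1..N}" for n
      using that True unfolding multi_idx_def k0_def dig_def c_def P_def
      by (simp add: diff_diff_add)
    have "hankel N R s i j = svec N R s (2 ^ N + 1 - (i + 1) - (j + 1))"
      unfolding hankel_def by (simp only: True[unfolded P_def] if_True)
    also have "\<dots> = (\<Sum>r\<in>tt_ranks N R. S r k0)"
      unfolding svec_def tt_entry_def S_def
      by (rule sum.cong[OF refl], rule prod.cong[OF refl]) (metis mi)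
    finally have "hankel N R s i j = (\<Sum>r\<in>tt_ranks N R. S r k0)" .
    then show ?thesis using True by simp
  next
    case False
    then show ?thesis by (simp add: hankel_def P_def)
  qed
  finally show "hankel N R s i j = (\<Sum>t\<in>t_idx N R.
              kron_list (map (\<lambda>n. Hcore N s n (t n) (t (n - 1))) (rev [1..<N+1])) i j)" by simp
qed

end
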